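(* Let $d,n\ge 2$, let $f$ be a stable update function, let $\mathcal D$ be an interaction distribution on $\Omega$ with full support, and let $\mathcal U^{(0)}$ be a strictly convex configuration of $n$ opinions in $\mathbb S^{d-1}$. Then, almost surely, $\mathcal U^{(t)}$ polarizes as $t\to\infty$.
   Context: Model: opinions are unit vectors in $\mathbb R^d$; a configuration is an $n$-tuple $\mathcal U=(\vec u_1,\dots,\vec u_n)$ and $A_{ij}=\langle\vec u_i,\vec u_j\rangle$. Update function $f:[-1,1]\to\mathbb R$. $\Omega=\{(i,j)\in[n]^2:i\ne j\}$, $\mathcal D$ a probability distribution on $\Omega$ (full support: every element has positive probability), $I^{(1)},I^{(2)},\dots$ i.i.d. with law $\mathcal D$; if the interaction at step $t$ is $(i,j)$ then $\vec u_k^{(t+1)}=\vec u_k^{(t)}$ for $k\ne i$ and $\vec u_i^{(t+1)}=\vec w/\|\vec w\|$ with $\vec w=\vec u_i^{(t)}+f(A^{(t)}_{ij})\vec u_j^{(t)}$. $f$ is stable if continuous and $\operatorname{sign}f(A)=\operatorname{sign}A$ for all $A\in[-1,1]$. Strictly convex: there exist $b_1,\dots,b_n\in\{\pm1\}$ with $\langle b_i\vec u_i,b_j\vec u_j\rangle>0$ for all $i,j$. Polarized: $\vec u_i=\pm\vec u_j$ for all $i,j$; $\mathcal U^{(t)}$ polarizes if $\lim_t\mathcal U^{(t)}$ exists and is polarized. *)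

theory Defs
  imports "HOL-Analysis.Analysis" "HOL-Probability.Probability"
begin

type_synonym ('d) config = "nat \<Rightarrow> real ^ ('d::finite)"

definition stable :: "(real \<Rightarrow> real) \<Rightarrow> bool" where
  "stable f \<longleftrightarrow> continuous_on {-1..1} f \<and> (\<forall>A\<in>{-1..1}. sgn (f A) = sgn A)"

definition Omega :: "nat \<Rightarrow> (nat \<times> nat) set" where
  "Omega n = {(i,j). i < n \<and> j < n \<and> i \<noteq> j}"

definition unit_config :: "nat \<Rightarrow> ('d::finite) config \<Rightarrow> bool" where
  "unit_config n U \<longleftrightarrow> (\<forall>i<n. norm (U i) = 1)"

definition strictly_convex :: "nat \<Rightarrow> ('d::finite) config \<Rightarrow> bool" where
  "strictly_convex n U \<longleftrightarrow>
     (\<exists>b::nat \<Rightarrow> real. (\<forall>i<n. b i \<in> {-1, 1}) \<and>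
        (\<forall>i<n. \<forall>j<n. inner (b i *\<^sub>R U i) (b j *\<^sub>R U j) > 0))"

definition polarized :: "nat \<Rightarrow> ('d::finite) config \<Rightarrow> bool" where
  "polarized n U \<longleftrightarrow> (\<forall>i<n. \<forall>j<n. U i = U j \<or> U i = - U j)"

definition update :: "(real \<Rightarrow> real) \<Rightarrow> ('d::finite) config \<Rightarrow> nat \<times> nat \<Rightarrow> ('d::finite) config" where
  "update f U p = (case p of (i, j) \<Rightarrow>
     (let w = U i + f (inner (U i) (U j)) *\<^sub>R U j in U(i := (1 / norm w) *\<^sub>R w)))"

text \<open>Trajectory driven by the sequence of interactions I^(1), I^(2), ... (stream entries 0,1,...).\<close>
primrec traj :: "(real \<Rightarrow> real) \<Rightarrow> ('d::finite) config \<Rightarrow> (nat \<times> nat) stream \<Rightarrow> nat \<Rightarrow> ('d::finite) config" where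
  "traj f U0 \<omega> 0 = U0"
| "traj f U0 \<omega> (Suc t) = update f (traj f U0 \<omega> t) (\<omega> !! t)"

definition polarizes :: "nat \<Rightarrow> (nat \<Rightarrow> ('d::finite) config) \<Rightarrow> bool" where
  "polarizes n X \<longleftrightarrow>
     (\<exists>L. (\<forall>i<n. (\<lambda>t. X t i) \<longlonglongrightarrow> L i) \<and> polarized n L)"

end

theory Submission
  imports Defs
begin


lemma nrm_le: fixes x y :: "'a::real_inner"
  assumes "norm x = 1" "norm y = 1" "0 \<le> c"
  shows "norm (x + c *\<^sub>R y) \<le> 1 + c"
  using norm_triangle_ineq[of x "c *\<^sub>R y"] assms by simp

lemma nrm_sq: fixes x y :: "'a::real_inner"
  assumes "norm x = 1" "norm y = 1"
  shows "(norm (x + c *\<^sub>R y))^2 = 1 + 2*c*inner x y + c^2"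
proof -
  have "inner x x = 1" "inner y y = 1" using assms by (metis power2_norm_eq_inner power_one)+
  thus ?thesis unfolding power2_norm_eq_inner by (simp add: inner_add_left inner_add_right inner_commute algebra_simps power2_eq_square)
qed

lemma nrm_ge: fixes x y :: "'a::real_inner"
  assumes "norm x = 1" "norm y = 1" "0 \<le> inner x y" "0 \<le> c"
  shows "1 \<le> norm (x + c *\<^sub>R y)"
proof -
  have "1 \<le> (norm (x + c *\<^sub>R y))^2" using nrm_sq[OF assms(1,2), of c] assms(3,4) by simp
  thus ?thesis by (metis abs_norm_cancel one_le_power  power2_le_imp_le norm_ge_zero one_power2 linorder_not_le less_eq_real_def)
qed

lemma unit_normalize: fixes v :: "'a::real_normed_vector"
  assumes "norm v > 0" shows "norm ((1 / norm v) *\<^sub>R v) = 1"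
  using assms by simp

lemma V2: fixes x y z :: "'a::real_inner"
  assumes "norm x = 1" "norm y = 1" "0 \<le> inner x y" "0 \<le> c"
    and "\<mu> \<le> inner x z" "\<mu> \<le> inner y z" "0 \<le> \<mu>"
  shows "\<mu> \<le> inner ((1 / norm (x + c *\<^sub>R y)) *\<^sub>R (x + c *\<^sub>R y)) z"
proof -
  define N where "N = norm (x + c *\<^sub>R y)"
  have N1: "1 \<le> N" "N \<le> 1 + c" using nrm_ge[OF assms(1-4)] nrm_le[OF assms(1,2,4)] by (simp_all add: N_def)
  have "inner ((1 / N) *\<^sub>R (x + c *\<^sub>R y)) z = (inner x z + c * inner y z) / N"
    by (simp add: inner_add_left)
  moreover have "N * \<mu> \<le> inner x z + c * inner y z"
  proof -
    have "N * \<mu> \<le> (1 + c) * \<mu>" using N1 assms(7) by (simp add: mult_right_mono)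
    also have "\<dots> \<le> inner x z + c * inner y z" using assms(4-6) mult_left_mono[of \<mu> "inner y z" c] by (simp add: algebra_simps)
    finally show ?thesis .
  qed
  ultimately show ?thesis using N1 by (simp add: N_def[symmetric] pos_le_divide_eq mult.commute)
qed

lemma V3: fixes x y :: "'a::real_inner"
  assumes "norm x = 1" "norm y = 1" "0 \<le> inner x y" "0 \<le> c"
  shows "1 - inner ((1 / norm (x + c *\<^sub>R y)) *\<^sub>R (x + c *\<^sub>R y)) y \<le> (1 - inner x y) / (1 + c)"
proof -
  define N where "N = norm (x + c *\<^sub>R y)"
  define a where "a = inner x y"
  have N1: "1 \<le> N" "N \<le> 1 + c" using nrm_ge[OF assms(1-4)] nrm_le[OF assms(1,2,4)] by (simp_all add: N_def)
  have yy: "inner y y = 1" using assms by (metis power2_norm_eq_inner power_one)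
  have e0: "inner (x + c *\<^sub>R y) y = a + c"
    by (simp add: inner_add_left yy a_def)
  have e: "inner ((1 / N) *\<^sub>R (x + c *\<^sub>R y)) y = (a + c) / N"
    by (simp only: inner_scaleR_left e0) simp
  have "(a + c) / (1 + c) \<le> (a + c) / N"
    using N1 assms(3,4) by (intro divide_left_mono) (auto simp: a_def)
  moreover have "1 - (a + c) / (1 + c) = (1 - a) / (1 + c)" using assms(4) by (simp add: field_simps)
  ultimately show ?thesis unfolding N_def[symmetric] e a_def[symmetric] by linarith
qed

lemma dist_unit: fixes x y :: "'a::real_inner"
  assumes "norm x = 1" "norm y = 1"
  shows "(norm (x - y))^2 = 2 - 2 * inner x y"
proof -
  have "inner x x = 1" "inner y y = 1" using assms by (metis power2_norm_eq_inner power_one)+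
  thus ?thesis by (simp add: power2_norm_eq_inner inner_diff_left inner_diff_right inner_commute)
qed

lemma V4: fixes x y z :: "'a::real_inner"
  assumes "norm x = 1" "norm y = 1" "norm z = 1"
  shows "1 - inner x z \<le> 2 * (1 - inner x y) + 2 * (1 - inner y z)"
proof -
  have "norm (x - z) \<le> norm (x - y) + norm (y - z)" by (rule norm_diff_triangle_ineq[of x y y z, simplified]) 
  hence "(norm (x - z))^2 \<le> (norm (x - y) + norm (y - z))^2" by (simp add: power_mono)
  also have "\<dots> \<le> 2 * (norm (x - y))^2 + 2 * (norm (y - z))^2"
  proof -
    have "0 \<le> (norm (x - y) - norm (y - z))^2" by simp
    thus ?thesis by (simp add: power2_eq_square algebra_simps)
  qed
  finally show ?thesis using dist_unit[OF assms(1,3)] dist_unit[OF assms(1,2)] dist_unit[OF assms(2,3)] by simp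
qed



locale setting =
  fixes f :: "real \<Rightarrow> real" and n :: nat and b :: "nat \<Rightarrow> real" and m0 \<delta> :: real
  assumes b: "\<And>i. b i = 1 \<or> b i = -1"
    and m0: "0 < m0" and \<delta>: "0 < \<delta>"
    and fsgn: "\<And>A. A \<in> {-1..1} \<Longrightarrow> sgn (f A) = sgn A"
    and f\<delta>: "\<And>A. A \<in> {-1..1} \<Longrightarrow> m0 \<le> \<bar>A\<bar> \<Longrightarrow> \<delta> \<le> \<bar>f A\<bar>"
begin

definition good :: "('d::finite) config \<Rightarrow> real \<Rightarrow> bool" where
  "good U \<mu> \<longleftrightarrow> (\<forall>i<n. norm (U i) = 1) \<and> (\<forall>i<n. \<forall>j<n. \<mu> \<le> inner (b i *\<^sub>R U i) (b j *\<^sub>R U j))"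

lemma bsq: "b i * b i = 1" using b[of i] by auto
lemma babs: "\<bar>b i\<bar> = 1" using b[of i] by auto

lemma norm_b: "norm (b i *\<^sub>R v) = norm v" by (simp add: babs)

lemma step_core:
  fixes U :: "('d::finite) config"
  assumes g: "good U \<mu>" and "m0 \<le> \<mu>" "i < n" "j < n"
  shows "\<exists>c. \<delta> \<le> c \<and> b i *\<^sub>R update f U (i,j) i =
     (1 / norm (b i *\<^sub>R U i + c *\<^sub>R (b j *\<^sub>R U j))) *\<^sub>R (b i *\<^sub>R U i + c *\<^sub>R (b j *\<^sub>R U j))"
proof -
  define A where "A = inner (U i) (U j)"
  define w where "w = U i + f A *\<^sub>R U j"
  have ui: "norm (U i) = 1" and uj: "norm (U j) = 1" using g assms by (auto simp: good_def)
  have xy: "inner (b i *\<^sub>R U i) (b j *\<^sub>R U j) = b i * b j * A" by (simp add: A_def)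
  have "\<mu> \<le> inner (b i *\<^sub>R U i) (b j *\<^sub>R U j)" using g assms unfolding good_def by blast
  hence pos: "m0 \<le> b i * b j * A" using xy assms(2) by linarith
  have A1: "A \<in> {-1..1}" using Cauchy_Schwarz_ineq2[of "U i" "U j"] ui uj by (auto simp: A_def abs_le_iff)
  have absA: "m0 \<le> \<bar>A\<bar>" using pos b[of i] b[of j] by auto
  define c where "c = b i * b j * f A"
  have c: "\<delta> \<le> c"
  proof -
    have "\<delta> \<le> \<bar>f A\<bar>" using f\<delta>[OF A1 absA] .
    moreover have "sgn (f A) = sgn A" using fsgn[OF A1] .
    ultimately show ?thesis using pos m0 b[of i] b[of j] unfolding c_def
      by (auto simp: sgn_if split: if_splits)
  qed
  have bw: "b i *\<^sub>R w = b i *\<^sub>R U i + c *\<^sub>R (b j *\<^sub>R U j)"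
    by (simp add: w_def c_def scaleR_add_right bsq mult.assoc)
  have "b i *\<^sub>R update f U (i,j) i = (1 / norm w) *\<^sub>R (b i *\<^sub>R w)"
    by (simp add: update_def Let_def w_def A_def)
  also have "\<dots> = (1 / norm (b i *\<^sub>R w)) *\<^sub>R (b i *\<^sub>R w)" by (simp only: norm_b)
  also have "\<dots> = (1 / norm (b i *\<^sub>R U i + c *\<^sub>R (b j *\<^sub>R U j))) *\<^sub>R (b i *\<^sub>R U i + c *\<^sub>R (b j *\<^sub>R U j))"
    by (simp only: bw)
  finally show ?thesis using c by blast
qed

lemma update_other: "k \<noteq> i \<Longrightarrow> update f U (i,j) k = U k"
  by (simp add: update_def Let_def)

lemma good_unit: "good U \<mu> \<Longrightarrow> i < n \<Longrightarrow> norm (b i *\<^sub>R U i) = 1"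
  by (simp add: good_def babs)

lemma good_le1: "good U \<mu> \<Longrightarrow> i < n \<Longrightarrow> \<mu> \<le> 1"
proof -
  assume g: "good U \<mu>" and i: "i < n"
  hence "\<mu> \<le> inner (b i *\<^sub>R U i) (b i *\<^sub>R U i)" by (auto simp: good_def)
  also have "\<dots> = 1" using good_unit[OF g i] by (metis power2_norm_eq_inner power_one)
  finally show ?thesis .
qed

lemma step_facts:
  fixes U :: "('d::finite) config"
  assumes g: "good U \<mu>" and "m0 \<le> \<mu>" "i < n" "j < n"
  obtains c x y where "\<delta> \<le> c" "x = b i *\<^sub>R U i" "y = b j *\<^sub>R U j"
    "b i *\<^sub>R update f U (i,j) i = (1 / norm (x + c *\<^sub>R y)) *\<^sub>R (x + c *\<^sub>R y)"
    "norm x = 1" "norm y = 1" "0 \<le> inner x y" "0 \<le> c" "norm (x + c *\<^sub>R y) > 0"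
proof -
  obtain c where c: "\<delta> \<le> c" "b i *\<^sub>R update f U (i,j) i =
     (1 / norm (b i *\<^sub>R U i + c *\<^sub>R (b j *\<^sub>R U j))) *\<^sub>R (b i *\<^sub>R U i + c *\<^sub>R (b j *\<^sub>R U j))"
    using step_core[OF assms] by blast
  have nx: "norm (b i *\<^sub>R U i) = 1" "norm (b j *\<^sub>R U j) = 1" using good_unit g assms by auto
  have "\<mu> \<le> inner (b i *\<^sub>R U i) (b j *\<^sub>R U j)" using g assms unfolding good_def by blast
  hence ip: "0 \<le> inner (b i *\<^sub>R U i) (b j *\<^sub>R U j)" using assms(2) m0 by linarith
  have "1 \<le> norm (b i *\<^sub>R U i + c *\<^sub>R (b j *\<^sub>R U j))" using nrm_ge[OF nx ip, of c] c \<delta> by simp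
  show ?thesis
    by (rule that[OF c(1) refl refl c(2) nx ip]) (use c \<delta> \<open>1 \<le> norm _\<close> in linarith)+
qed

lemma good_step:
  fixes U :: "('d::finite) config"
  assumes g: "good U \<mu>" and m: "m0 \<le> \<mu>" and ij: "(i,j) \<in> Omega n"
  shows "good (update f U (i,j)) \<mu>"
proof -
  have i: "i < n" and j: "j < n" using ij by (auto simp: Omega_def)
  obtain c x y where c: "\<delta> \<le> c" "x = b i *\<^sub>R U i" "y = b j *\<^sub>R U j"
    "b i *\<^sub>R update f U (i,j) i = (1 / norm (x + c *\<^sub>R y)) *\<^sub>R (x + c *\<^sub>R y)"
    "norm x = 1" "norm y = 1" "0 \<le> inner x y" "0 \<le> c" "norm (x + c *\<^sub>R y) > 0"
    using step_facts[OF g m i j] by blast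
  define U' where "U' = update f U (i,j)"
  have oth: "\<And>k. k \<noteq> i \<Longrightarrow> U' k = U k" by (simp add: U'_def update_other)
  have ni: "norm (b i *\<^sub>R U' i) = 1" using c(4,9) by (simp add: U'_def)
  have mu0: "0 \<le> \<mu>" using m m0 by simp
  have mu1: "\<mu> \<le> 1" using good_le1[OF g i] .
  have key: "\<mu> \<le> inner (b i *\<^sub>R U' i) (b l *\<^sub>R U' l)" if l: "l < n" for l
  proof (cases "l = i")
    case True
    have "inner (b i *\<^sub>R U' i) (b i *\<^sub>R U' i) = 1" using ni by (metis power2_norm_eq_inner power_one)
    thus ?thesis using True mu1 by simp
  next
    case False
    have "\<mu> \<le> inner x (b l *\<^sub>R U l)" "\<mu> \<le> inner y (b l *\<^sub>R U l)"
      using g i j l c(2,3) by (auto simp: good_def)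
    from V2[OF c(5,6,7,8) this mu0] show ?thesis using False oth c(4) by (simp add: U'_def)
  qed
  have "\<forall>k<n. norm (U' k) = 1"
  proof (intro allI impI)
    fix k assume k: "k < n"
    show "norm (U' k) = 1"
    proof (cases "k = i")
      case True thus ?thesis using ni norm_b by metis
    next
      case False thus ?thesis using oth[OF False] g k by (simp add: good_def)
    qed
  qed
  moreover have "\<forall>k<n. \<forall>l<n. \<mu> \<le> inner (b k *\<^sub>R U' k) (b l *\<^sub>R U' l)"
  proof (intro allI impI)
    fix k l assume k: "k < n" and l: "l < n"
    show "\<mu> \<le> inner (b k *\<^sub>R U' k) (b l *\<^sub>R U' l)"
    proof (cases "k = i")
      case True thus ?thesis using key l by simp
    next
      case False
      show ?thesis
      proof (cases "l = i")
        case True thus ?thesis using key[OF k] False by (simp add: inner_commute)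
      next
        case False2: False
        thus ?thesis using False g k l oth by (auto simp: good_def)
      qed
    qed
  qed
  ultimately show ?thesis by (simp add: good_def U'_def)
qed

lemma cone_step:
  fixes U :: "('d::finite) config"
  assumes g: "good U m0" and ij: "(i,j) \<in> Omega n" and z: "\<forall>k<n. \<mu> \<le> inner (b k *\<^sub>R U k) z"
    and mu0: "0 \<le> \<mu>"
  shows "\<forall>k<n. \<mu> \<le> inner (b k *\<^sub>R update f U (i,j) k) z"
proof -
  have i: "i < n" and j: "j < n" using ij by (auto simp: Omega_def)
  obtain c x y where c: "\<delta> \<le> c" "x = b i *\<^sub>R U i" "y = b j *\<^sub>R U j"
    "b i *\<^sub>R update f U (i,j) i = (1 / norm (x + c *\<^sub>R y)) *\<^sub>R (x + c *\<^sub>R y)"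
    "norm x = 1" "norm y = 1" "0 \<le> inner x y" "0 \<le> c" "norm (x + c *\<^sub>R y) > 0"
    using step_facts[OF g order_refl i j] by blast
  have "\<mu> \<le> inner x z" "\<mu> \<le> inner y z" using z i j c(2,3) by auto
  from V2[OF c(5,6,7,8) this mu0] have "\<mu> \<le> inner (b i *\<^sub>R update f U (i,j) i) z" using c(4) by simp
  thus ?thesis using z update_other by metis
qed

lemma pull_step:
  fixes U :: "('d::finite) config"
  assumes g: "good U \<mu>" and m: "m0 \<le> \<mu>" and ij: "(i,j) \<in> Omega n"
  shows "1 - inner (b i *\<^sub>R update f U (i,j) i) (b j *\<^sub>R update f U (i,j) j)
     \<le> (1 - inner (b i *\<^sub>R U i) (b j *\<^sub>R U j)) / (1 + \<delta>)"
proof -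
  have i: "i < n" and j: "j < n" and ne: "i \<noteq> j" using ij by (auto simp: Omega_def)
  obtain c x y where c: "\<delta> \<le> c" "x = b i *\<^sub>R U i" "y = b j *\<^sub>R U j"
    "b i *\<^sub>R update f U (i,j) i = (1 / norm (x + c *\<^sub>R y)) *\<^sub>R (x + c *\<^sub>R y)"
    "norm x = 1" "norm y = 1" "0 \<le> inner x y" "0 \<le> c" "norm (x + c *\<^sub>R y) > 0"
    using step_facts[OF g m i j] by blast
  have uj: "update f U (i,j) j = U j" using ne update_other by metis
  have "inner x y \<le> 1" using Cauchy_Schwarz_ineq2[of x y] c(5,6) by simp
  hence "(1 - inner x y) / (1 + c) \<le> (1 - inner x y) / (1 + \<delta>)"
    using c(1) \<delta> by (intro divide_left_mono) auto
  thus ?thesis using V3[OF c(5,6,7,8)] c(2,3,4) uj by simp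
qed

end


lemma traj_foldl: "traj f U0 \<omega> (t + k) = foldl (update f) (traj f U0 \<omega> t) (stake k (sdrop t \<omega>))"
proof (induction k arbitrary: t)
  case 0 thus ?case by simp
next
  case (Suc k)
  have "traj f U0 \<omega> (t + Suc k) = traj f U0 \<omega> (Suc t + k)" by simp
  also have "\<dots> = foldl (update f) (traj f U0 \<omega> (Suc t)) (stake k (sdrop (Suc t) \<omega>))" by (rule Suc.IH)
  also have "\<dots> = foldl (update f) (traj f U0 \<omega> t) (stake (Suc k) (sdrop t \<omega>))"
    by (simp add: sdrop_snth)
  finally show ?case .
qed

context setting begin

lemma good_mono: "good U \<mu> \<Longrightarrow> \<mu>' \<le> \<mu> \<Longrightarrow> good U \<mu>'"
  unfolding good_def by (meson order_trans)

lemma rep: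
  fixes V :: "('d::finite) config"
  assumes "good V \<mu>" "m0 \<le> \<mu>" "(i,j) \<in> Omega n"
  shows "good (foldl (update f) V (replicate k (i,j))) \<mu> \<and>
    (\<forall>l. l \<noteq> i \<longrightarrow> foldl (update f) V (replicate k (i,j)) l = V l) \<and>
    1 - inner (b i *\<^sub>R foldl (update f) V (replicate k (i,j)) i) (b j *\<^sub>R foldl (update f) V (replicate k (i,j)) j)
      \<le> (1 / (1 + \<delta>))^k * (1 - inner (b i *\<^sub>R V i) (b j *\<^sub>R V j))"
  using assms(1)
proof (induction k arbitrary: V)
  case 0 thus ?case by simp
next
  case (Suc k)
  define V1 where "V1 = update f V (i,j)"
  have g1: "good V1 \<mu>" using good_step[OF Suc.prems assms(2,3)] by (simp add: V1_def)
  have o1: "\<forall>l. l \<noteq> i \<longrightarrow> V1 l = V l" by (simp add: V1_def update_other)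
  have p1: "1 - inner (b i *\<^sub>R V1 i) (b j *\<^sub>R V1 j) \<le> (1 - inner (b i *\<^sub>R V i) (b j *\<^sub>R V j)) / (1 + \<delta>)"
    using pull_step[OF Suc.prems assms(2,3)] by (simp add: V1_def)
  have eq: "foldl (update f) V (replicate (Suc k) (i,j)) = foldl (update f) V1 (replicate k (i,j))"
    by (simp add: V1_def)
  note IH = Suc.IH[OF g1]
  have "(1 / (1 + \<delta>))^k * (1 - inner (b i *\<^sub>R V1 i) (b j *\<^sub>R V1 j))
      \<le> (1 / (1 + \<delta>))^k * ((1 - inner (b i *\<^sub>R V i) (b j *\<^sub>R V j)) / (1 + \<delta>))"
    using p1 \<delta> by (intro mult_left_mono) auto
  also have "\<dots> = (1 / (1 + \<delta>))^Suc k * (1 - inner (b i *\<^sub>R V i) (b j *\<^sub>R V j))"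
    by (simp add: field_simps)
  finally have c3: "(1 / (1 + \<delta>))^k * (1 - inner (b i *\<^sub>R V1 i) (b j *\<^sub>R V1 j))
      \<le> (1 / (1 + \<delta>))^Suc k * (1 - inner (b i *\<^sub>R V i) (b j *\<^sub>R V j))" .
  show ?case unfolding eq
  proof (intro conjI)
    show "good (foldl (update f) V1 (replicate k (i, j))) \<mu>" using IH by blast
    show "\<forall>l. l \<noteq> i \<longrightarrow> foldl (update f) V1 (replicate k (i, j)) l = V l" using IH o1 by simp
    show "1 - inner (b i *\<^sub>R foldl (update f) V1 (replicate k (i, j)) i) (b j *\<^sub>R foldl (update f) V1 (replicate k (i, j)) j)
      \<le> (1 / (1 + \<delta>))^Suc k * (1 - inner (b i *\<^sub>R V i) (b j *\<^sub>R V j))"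
      using IH c3 by linarith
  qed
qed

lemma multi:
  fixes V :: "('d::finite) config"
  assumes "good V \<mu>" "m0 \<le> \<mu>" "distinct xs" "\<forall>x\<in>set xs. 0 < x \<and> x < n"
  shows "good (foldl (update f) V (concat (map (\<lambda>i. replicate r (i,0)) xs))) \<mu> \<and>
    (\<forall>l. l \<notin> set xs \<longrightarrow> foldl (update f) V (concat (map (\<lambda>i. replicate r (i,0)) xs)) l = V l) \<and>
    (\<forall>i\<in>set xs. 1 - inner (b i *\<^sub>R foldl (update f) V (concat (map (\<lambda>i. replicate r (i,0)) xs)) i)
        (b 0 *\<^sub>R foldl (update f) V (concat (map (\<lambda>i. replicate r (i,0)) xs)) 0) \<le> (1 / (1 + \<delta>))^r * (1 - \<mu>))"
  using assms(1,3,4)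
proof (induction xs arbitrary: V)
  case Nil thus ?case by simp
next
  case (Cons x xs)
  define V1 where "V1 = foldl (update f) V (replicate r (x,0))"
  have om: "(x,0) \<in> Omega n" using Cons.prems by (auto simp: Omega_def)
  note R = rep[OF Cons.prems(1) assms(2) om, of r, folded V1_def]
  have g1: "good V1 \<mu>" using R by blast
  have "\<mu> \<le> inner (b x *\<^sub>R V x) (b 0 *\<^sub>R V 0)" using Cons.prems(1,3) unfolding good_def by auto
  hence "(1 / (1 + \<delta>))^r * (1 - inner (b x *\<^sub>R V x) (b 0 *\<^sub>R V 0)) \<le> (1 / (1 + \<delta>))^r * (1 - \<mu>)"
    using \<delta> by (intro mult_left_mono) auto
  hence px: "1 - inner (b x *\<^sub>R V1 x) (b 0 *\<^sub>R V1 0) \<le> (1 / (1 + \<delta>))^r * (1 - \<mu>)"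
    using R by linarith
  have IH: "good (foldl (update f) V1 (concat (map (\<lambda>i. replicate r (i,0)) xs))) \<mu> \<and>
    (\<forall>l. l \<notin> set xs \<longrightarrow> foldl (update f) V1 (concat (map (\<lambda>i. replicate r (i,0)) xs)) l = V1 l) \<and>
    (\<forall>i\<in>set xs. 1 - inner (b i *\<^sub>R foldl (update f) V1 (concat (map (\<lambda>i. replicate r (i,0)) xs)) i)
        (b 0 *\<^sub>R foldl (update f) V1 (concat (map (\<lambda>i. replicate r (i,0)) xs)) 0) \<le> (1 / (1 + \<delta>))^r * (1 - \<mu>))"
    using Cons.IH[OF g1] Cons.prems by simp
  have eq: "foldl (update f) V (concat (map (\<lambda>i. replicate r (i,0)) (x # xs))) =
     foldl (update f) V1 (concat (map (\<lambda>i. replicate r (i,0)) xs))" by (simp add: V1_def)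
  have z: "0 \<notin> set xs" "x \<notin> set xs" "x \<noteq> 0" using Cons.prems by auto
  show ?case unfolding eq using IH R px z by auto
qed

lemma block:
  fixes V :: "('d::finite) config"
  assumes g: "good V \<mu>" and m: "m0 \<le> \<mu>" and n2: "2 \<le> n" and r: "4 * (1 / (1 + \<delta>))^r \<le> 1/2"
  shows "good (foldl (update f) V (concat (map (\<lambda>i. replicate r (i,0)) [1..<n]))) (1 - (1 - \<mu>) / 2)"
proof -
  define W where "W = foldl (update f) V (concat (map (\<lambda>i. replicate r (i,0)) [1..<n]))"
  define lam where "lam = (1 / (1 + \<delta>))^r"
  note M = multi[OF g m, of "[1..<n]" r, folded W_def lam_def]
  have gW: "good W \<mu>" using M by simp
  have mu1: "\<mu> \<le> 1" using good_le1[OF g, of 0] n2 by simp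
  have lam0: "0 \<le> lam" using \<delta> by (simp add: lam_def)
  have e: "1 - inner (b i *\<^sub>R W i) (b 0 *\<^sub>R W 0) \<le> lam * (1 - \<mu>)" if i: "i < n" for i
  proof (cases "i = 0")
    case True
    have "inner (b 0 *\<^sub>R W 0) (b 0 *\<^sub>R W 0) = 1" using good_unit[OF gW, of 0] n2
      by (metis power2_norm_eq_inner power_one le0 less_le_trans zero_less_numeral)
    moreover have "0 \<le> lam * (1 - \<mu>)" using lam0 mu1 by simp
    ultimately show ?thesis using True by simp
  next
    case False thus ?thesis using M i by auto
  qed
  have "\<forall>i<n. \<forall>k<n. 1 - (1 - \<mu>) / 2 \<le> inner (b i *\<^sub>R W i) (b k *\<^sub>R W k)"
  proof (intro allI impI)
    fix i k assume i: "i < n" and k: "k < n"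
    have u: "norm (b i *\<^sub>R W i) = 1" "norm (b 0 *\<^sub>R W 0) = 1" "norm (b k *\<^sub>R W k) = 1"
      using good_unit[OF gW] i k n2 by auto
    have "1 - inner (b i *\<^sub>R W i) (b k *\<^sub>R W k) \<le> 2 * (1 - inner (b i *\<^sub>R W i) (b 0 *\<^sub>R W 0)) + 2 * (1 - inner (b 0 *\<^sub>R W 0) (b k *\<^sub>R W k))"
      by (rule V4[OF u])
    also have "\<dots> \<le> 2 * (lam * (1 - \<mu>)) + 2 * (lam * (1 - \<mu>))"
      using e[OF i] e[OF k] by (simp add: inner_commute)
    also have "\<dots> = (4 * lam) * (1 - \<mu>)" by simp
    also have "\<dots> \<le> (1/2) * (1 - \<mu>)" using r mu1 by (intro mult_right_mono) (auto simp: lam_def)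
    finally show "1 - (1 - \<mu>) / 2 \<le> inner (b i *\<^sub>R W i) (b k *\<^sub>R W k)" by linarith
  qed
  thus ?thesis using gW unfolding W_def good_def by blast
qed

end


lemma close_unit: fixes x y :: "'a::real_inner"
  assumes "norm x = 1" "norm y = 1" "0 < e" "1 - e^2/16 \<le> inner x y"
  shows "norm (x - y) < e / 2"
proof -
  have "(norm (x - y))^2 \<le> e^2/8" using dist_unit[OF assms(1,2)] assms(4) by simp
  also have "\<dots> < (e/2)^2" using assms(3) by (simp add: power2_eq_square field_simps)
  finally show ?thesis using assms(3) by (meson power_less_imp_less_base less_le zero_le_divide_iff zero_le_numeral)
qed

context setting begin

lemma traj_good:
  fixes U0 :: "('d::finite) config"
  assumes "good (traj f U0 \<omega> t) \<mu>" "m0 \<le> \<mu>" "\<forall>s. \<omega> !! s \<in> Omega n" "t \<le> s"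
  shows "good (traj f U0 \<omega> s) \<mu>"
  using assms(4)
proof (induction s rule: dec_induct)
  case base thus ?case using assms(1) .
next
  case (step s)
  obtain i j where "\<omega> !! s = (i,j)" by (cases "\<omega> !! s")
  thus ?case using good_step[OF step.IH assms(2)] assms(3) by (metis traj.simps(2))
qed

lemma traj_cone:
  fixes U0 :: "('d::finite) config"
  assumes "\<forall>s. good (traj f U0 \<omega> s) m0" "\<forall>s. \<omega> !! s \<in> Omega n"
    "\<forall>k<n. \<mu> \<le> inner (b k *\<^sub>R traj f U0 \<omega> t k) z" "0 \<le> \<mu>" "t \<le> s"
  shows "\<forall>k<n. \<mu> \<le> inner (b k *\<^sub>R traj f U0 \<omega> s k) z"
  using assms(5)
proof (induction s rule: dec_induct)
  case base thus ?case using assms(3) .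
next
  case (step s)
  obtain i j where ij: "\<omega> !! s = (i,j)" by (cases "\<omega> !! s")
  have "(i,j) \<in> Omega n" using assms(2) ij by metis
  from cone_step[OF _ this step.IH assms(4)] assms(1) show ?case using ij by simp
qed

lemma det:
  fixes U0 :: "('d::finite) config"
  assumes g0: "good U0 m0" and n2: "2 \<le> n" and om: "\<forall>s. \<omega> !! s \<in> Omega n"
    and r: "4 * (1 / (1 + \<delta>))^r \<le> 1/2" and r1: "1 \<le> r"
    and io: "\<forall>k. \<exists>j\<ge>k. stake (r * (n - 1)) (sdrop (j * (r * (n - 1))) \<omega>) = concat (map (\<lambda>i. replicate r (i,0)) [1..<n])"
  shows "polarizes n (traj f U0 \<omega>)"
proof -
  define L where "L = r * (n - 1)"
  define P where "P = concat (map (\<lambda>i. replicate r (i,(0::nat))) [1..<n])"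
  define X where "X = traj f U0 \<omega>"
  have L1: "1 \<le> L" using r1 n2 by (simp add: L_def)
  have io': "\<forall>k. \<exists>j\<ge>k. stake L (sdrop (j * L) \<omega>) = P" using io by (simp add: L_def P_def)
  have m01: "m0 \<le> 1" using good_le1[OF g0, of 0] n2 by simp
  have gall: "\<forall>s. good (X s) m0" using traj_good[OF _ order_refl om, of U0 0] g0 by (simp add: X_def)
  define mu where "mu = (\<lambda>N::nat. 1 - (1 - m0) / 2^N)"
  have mu_ge: "m0 \<le> mu N" for N
  proof -
    have "(1 - m0) / 2^N \<le> (1 - m0) / 1" using m01 by (intro divide_left_mono) auto
    thus ?thesis by (simp add: mu_def)
  qed
  have ex: "\<exists>t. good (X t) (mu N)" for N
  proof (induction N)
    case 0 thus ?case using g0 by (auto simp: mu_def X_def intro!: exI[of _ 0])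
  next
    case (Suc N)
    then obtain t where t: "good (X t) (mu N)" by blast
    obtain j where j: "j \<ge> t" "stake L (sdrop (j * L) \<omega>) = P" using io' by blast
    have "t \<le> j * L" using j(1) L1 by (metis le_trans mult_le_mono2 mult.right_neutral mult.commute)
    hence gj: "good (X (j * L)) (mu N)" using traj_good[OF _ mu_ge om] t by (simp add: X_def)
    have "X (j * L + L) = foldl (update f) (X (j * L)) P" using j(2) traj_foldl by (metis X_def)
    hence "good (X (j * L + L)) (1 - (1 - mu N) / 2)"
      using block[OF gj mu_ge n2 r] by (simp add: P_def)
    moreover have "1 - (1 - mu N) / 2 = mu (Suc N)" by (simp add: mu_def field_simps)
    ultimately show ?case by auto
  qed
  have small: "\<exists>t. (\<forall>s\<ge>t. good (X s) (1 - \<epsilon>)) \<and> (\<forall>s\<ge>t. \<forall>i<n. \<forall>k<n. 1 - \<epsilon> \<le> inner (b i *\<^sub>R X s i) (b k *\<^sub>R X t k))"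
    if e: "0 < \<epsilon>" for \<epsilon>
  proof -
    obtain N where N: "(1/2::real)^N < \<epsilon>" using real_arch_pow_inv[OF e, of "1/2"] by auto
    have "(1 - m0) / 2^N \<le> (1/2::real)^N" using m0 m01 by (simp add: power_divide divide_le_cancel)
    hence muN: "1 - \<epsilon> \<le> mu N" using N by (simp add: mu_def)
    obtain t where t: "good (X t) (mu N)" using ex by blast
    have A: "\<forall>s\<ge>t. good (X s) (1 - \<epsilon>)"
      using traj_good[OF _ mu_ge om] t good_mono[OF _ muN] by (metis X_def)
    have B: "\<forall>s\<ge>t. \<forall>i<n. \<forall>k<n. 1 - \<epsilon> \<le> inner (b i *\<^sub>R X s i) (b k *\<^sub>R X t k)"
    proof (intro allI impI)
      fix s i k assume s: "t \<le> s" and i: "i < n" and k: "k < n"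
      have base: "\<forall>i<n. mu N \<le> inner (b i *\<^sub>R X t i) (b k *\<^sub>R X t k)" using t k by (simp add: good_def)
      have "mu N \<ge> 0" using mu_ge[of N] m0 by linarith
      from traj_cone[OF gall[unfolded X_def] om base[unfolded X_def] this s] i
      have "mu N \<le> inner (b i *\<^sub>R X s i) (b k *\<^sub>R X t k)" by (simp add: X_def)
      thus "1 - \<epsilon> \<le> inner (b i *\<^sub>R X s i) (b k *\<^sub>R X t k)" using muN by linarith
    qed
    show ?thesis using A B by blast
  qed
  have unitX: "norm (b i *\<^sub>R X s i) = 1" if "i < n" for i s using good_unit[OF _ that] gall by blast
  have cauchy: "Cauchy (\<lambda>s. X s i)" if i: "i < n" for i
  proof (rule CauchyI)
    fix e :: real assume e: "0 < e"
    obtain t where t: "\<forall>s\<ge>t. \<forall>i<n. \<forall>k<n. 1 - e^2/16 \<le> inner (b i *\<^sub>R X s i) (b k *\<^sub>R X t k)"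
      using small[of "e^2/16"] e by auto
    have c: "norm (b i *\<^sub>R X s i - b i *\<^sub>R X t i) < e / 2" if "t \<le> s" for s
      using close_unit[OF unitX[OF i] unitX[OF i] e] t that i by blast
    have nb: "norm (b i *\<^sub>R X s i - b i *\<^sub>R X s' i) = norm (X s i - X s' i)" for s s'
      using norm_b[of i "X s i - X s' i"] by (simp add: scaleR_diff_right)
    show "\<exists>M. \<forall>m\<ge>M. \<forall>na\<ge>M. norm (X m i - X na i) < e"
    proof (intro exI allI impI)
      fix m na assume "t \<le> m" "t \<le> na"
      hence "norm (X m i - X t i) < e/2" "norm (X na i - X t i) < e/2" using c nb by auto
      moreover have "norm (X m i - X na i) \<le> norm (X m i - X t i) + norm (X na i - X t i)"
        using norm_triangle_ineq4[of "X m i - X t i" "X na i - X t i"] by simp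
      ultimately show "norm (X m i - X na i) < e" by linarith
    qed
  qed
  define Lim where "Lim = (\<lambda>i. lim (\<lambda>s. X s i))"
  have conv: "(\<lambda>s. X s i) \<longlonglongrightarrow> Lim i" if "i < n" for i
    using cauchy[OF that] by (simp add: Lim_def Cauchy_convergent_iff convergent_LIMSEQ_iff)
  have pol: "b i *\<^sub>R Lim i = b k *\<^sub>R Lim k" if i: "i < n" and k: "k < n" for i k
  proof -
    have t1: "(\<lambda>s. b i *\<^sub>R X s i - b k *\<^sub>R X s k) \<longlonglongrightarrow> b i *\<^sub>R Lim i - b k *\<^sub>R Lim k"
      by (intro tendsto_intros conv i k)
    have t2: "(\<lambda>s. b i *\<^sub>R X s i - b k *\<^sub>R X s k) \<longlonglongrightarrow> 0"
    proof (rule LIMSEQ_I)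
      fix e :: real assume e: "0 < e"
      obtain t where t: "\<forall>s\<ge>t. good (X s) (1 - e^2/16)" using small[of "e^2/16"] e by auto
      show "\<exists>no. \<forall>na\<ge>no. norm (b i *\<^sub>R X na i - b k *\<^sub>R X na k - 0) < e"
      proof (intro exI allI impI)
        fix s assume "t \<le> s"
        hence "1 - e^2/16 \<le> inner (b i *\<^sub>R X s i) (b k *\<^sub>R X s k)" using t i k by (simp add: good_def)
        from close_unit[OF unitX[OF i] unitX[OF k] e this]
        show "norm (b i *\<^sub>R X s i - b k *\<^sub>R X s k - 0) < e" using e by simp
      qed
    qed
    from LIMSEQ_unique[OF t1 t2] show ?thesis by simp
  qed
  have "polarized n Lim"
    unfolding polarized_def
  proof (intro allI impI)
    fix i k assume i: "i < n" and k: "k < n"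
    have "Lim i = (b i * b k) *\<^sub>R Lim k"
      using arg_cong[OF pol[OF i k], of "\<lambda>v. b i *\<^sub>R v"] by (simp add: bsq)
    thus "Lim i = Lim k \<or> Lim i = - Lim k" using b[of i] b[of k] by auto
  qed
  thus ?thesis unfolding polarizes_def using conv X_def by blast
qed

end


lemma space_SD: "space (stream_space (measure_pmf D)) = UNIV"
  by (simp add: space_stream_space)

lemma meas_stake: "{\<omega>. stake L \<omega> \<in> X} \<in> sets (stream_space (measure_pmf (D :: ('a::countable) pmf)))"
proof -
  have "stake L \<in> measurable (stream_space (measure_pmf D)) (count_space UNIV)" by measurable
  from measurable_sets[OF this, of X] show ?thesis by (simp add: space_SD vimage_def)
qed

lemma meas_sdrop: "B \<in> sets (stream_space (measure_pmf D)) \<Longrightarrow> {\<omega>. sdrop L \<omega> \<in> B} \<in> sets (stream_space (measure_pmf D))"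
  using measurable_sets[OF measurable_sdrop[of L "measure_pmf D"]] by (simp add: space_SD vimage_def)

lemma meas_both: "B \<in> sets (stream_space (measure_pmf (D :: ('a::countable) pmf))) \<Longrightarrow>
   {\<omega>. stake L \<omega> \<in> X \<and> sdrop L \<omega> \<in> B} \<in> sets (stream_space (measure_pmf D))"
proof -
  assume B: "B \<in> sets (stream_space (measure_pmf D))"
  have "{\<omega>. stake L \<omega> \<in> X \<and> sdrop L \<omega> \<in> B} = {\<omega>. stake L \<omega> \<in> X} \<inter> {\<omega>. sdrop L \<omega> \<in> B}" by auto
  thus ?thesis using meas_stake[of L X D] meas_sdrop[OF B, of L] by auto
qed

lemma decomp:
  fixes D :: "('a::countable) pmf"
  assumes B: "B \<in> sets (stream_space (measure_pmf D))"
  shows "emeasure (stream_space (measure_pmf D)) {\<omega>. stake L \<omega> \<in> X \<and> sdrop L \<omega> \<in> B} =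
    emeasure (stream_space (measure_pmf D)) {\<omega>. stake L \<omega> \<in> X} * emeasure (stream_space (measure_pmf D)) B"
proof (induction L arbitrary: X)
  case 0
  interpret S: prob_space "stream_space (measure_pmf D)" by (rule prob_space.prob_space_stream_space[OF prob_space_measure_pmf])
  show ?case
  proof (cases "[] \<in> X")
    case True
    hence "{\<omega>. stake 0 \<omega> \<in> X} = space (stream_space (measure_pmf D))" by (simp add: space_SD)
    moreover have "emeasure (stream_space (measure_pmf D)) UNIV = 1" using S.emeasure_space_1 by (simp add: space_SD)
    ultimately show ?thesis using True by simp
  next
    case False thus ?thesis by simp
  qed
next
  case (Suc L)
  let ?S = "stream_space (measure_pmf D)"
  have "emeasure ?S {\<omega>. stake (Suc L) \<omega> \<in> X \<and> sdrop (Suc L) \<omega> \<in> B}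
     = (\<integral>\<^sup>+t. emeasure ?S {x\<in>space ?S. t ## x \<in> {\<omega>. stake (Suc L) \<omega> \<in> X \<and> sdrop (Suc L) \<omega> \<in> B}} \<partial>measure_pmf D)"
    by (rule prob_space.emeasure_stream_space[OF prob_space_measure_pmf meas_both[OF B]])
  also have "\<dots> = (\<integral>\<^sup>+t. emeasure ?S {x. stake L x \<in> {xs. t # xs \<in> X} \<and> sdrop L x \<in> B} \<partial>measure_pmf D)"
    by (simp add: space_SD)
  also have "\<dots> = (\<integral>\<^sup>+t. emeasure ?S {x. stake L x \<in> {xs. t # xs \<in> X}} * emeasure ?S B \<partial>measure_pmf D)"
    by (simp only: Suc.IH)
  also have "\<dots> = (\<integral>\<^sup>+t. emeasure ?S {x. stake L x \<in> {xs. t # xs \<in> X}} \<partial>measure_pmf D) * emeasure ?S B"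
    by (rule nn_integral_multc) simp
  also have "(\<integral>\<^sup>+t. emeasure ?S {x. stake L x \<in> {xs. t # xs \<in> X}} \<partial>measure_pmf D)
     = (\<integral>\<^sup>+t. emeasure ?S {x\<in>space ?S. t ## x \<in> {\<omega>. stake (Suc L) \<omega> \<in> X}} \<partial>measure_pmf D)"
    by (simp add: space_SD)
  also have "\<dots> = emeasure ?S {\<omega>. stake (Suc L) \<omega> \<in> X}"
    by (rule prob_space.emeasure_stream_space[OF prob_space_measure_pmf meas_stake, symmetric])
  finally show ?case .
qed

lemma pos_word:
  fixes D :: "('a::countable) pmf"
  assumes "set w \<subseteq> set_pmf D"
  shows "0 < emeasure (stream_space (measure_pmf D)) {\<omega>. stake (length w) \<omega> = w}"
  using assms
proof (induction w)
  case Nil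
  interpret S: prob_space "stream_space (measure_pmf D)" by (rule prob_space.prob_space_stream_space[OF prob_space_measure_pmf])
  have "{\<omega>. stake (length []) \<omega> = []} = space (stream_space (measure_pmf D))" by (simp add: space_SD)
  moreover have "emeasure (stream_space (measure_pmf D)) UNIV = 1" using S.emeasure_space_1 by (simp add: space_SD)
  ultimately show ?case by simp
next
  case (Cons x w)
  let ?S = "stream_space (measure_pmf D)"
  have "emeasure ?S {\<omega>. stake (length (x # w)) \<omega> = x # w}
     = (\<integral>\<^sup>+t. emeasure ?S {y\<in>space ?S. t ## y \<in> {\<omega>. stake (length (x # w)) \<omega> = x # w}} \<partial>measure_pmf D)"
    using prob_space.emeasure_stream_space[OF prob_space_measure_pmf meas_stake[of "length (x # w)" "{x # w}" D]] by simp
  also have "\<dots> = (\<integral>\<^sup>+t. emeasure ?S {y. stake (length w) y = w} * indicator {x} t \<partial>measure_pmf D)"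
    by (intro nn_integral_cong) (auto simp: space_SD split: split_indicator)
  also have "\<dots> = emeasure ?S {y. stake (length w) y = w} * emeasure (measure_pmf D) {x}"
    by simp
  finally have e: "emeasure ?S {\<omega>. stake (length (x # w)) \<omega> = x # w} = emeasure ?S {y. stake (length w) y = w} * emeasure (measure_pmf D) {x}" .
  have "0 < emeasure (measure_pmf D) {x}" using Cons.prems
    by (simp add: emeasure_pmf_single pmf_positive)
  moreover have "0 < emeasure ?S {y. stake (length w) y = w}" using Cons by simp
  ultimately show ?case unfolding e by (simp add: ennreal_zero_less_mult_iff)
qed



lemma io_word:
  fixes D :: "('a::countable) pmf"
  assumes w: "set w \<subseteq> set_pmf D" "w \<noteq> []"
  shows "AE \<omega> in stream_space (measure_pmf D). \<forall>k. \<exists>j\<ge>k. stake (length w) (sdrop (j * length w) \<omega>) = w"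
proof -
  let ?S = "stream_space (measure_pmf D)"
  interpret S: prob_space ?S by (rule prob_space.prob_space_stream_space[OF prob_space_measure_pmf])
  define L where "L = length w"
  define C where "C = {\<omega>. stake L \<omega> \<in> - {w}}"
  define A where "A = {\<omega>. \<forall>j. stake L (sdrop (j * L) \<omega>) \<noteq> w}"
  have C: "C \<in> sets ?S" unfolding C_def by (rule meas_stake)
  have "A = (\<Inter>j. {\<omega>. sdrop (j * L) \<omega> \<in> C})" by (auto simp: A_def C_def)
  moreover have "\<And>j. {\<omega>. sdrop (j * L) \<omega> \<in> C} \<in> sets ?S" by (rule meas_sdrop[OF C])
  ultimately have Ameas: "A \<in> sets ?S" by auto
  have "A = {\<omega>. stake L \<omega> \<in> - {w} \<and> sdrop L \<omega> \<in> A}"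
  proof (intro set_eqI iffI)
    fix \<omega> assume "\<omega> \<in> A"
    hence a: "\<forall>j. stake L (sdrop (j * L) \<omega>) \<noteq> w" by (simp add: A_def)
    have "stake L \<omega> \<noteq> w" using a[rule_format, of 0] by simp
    moreover have "\<forall>j. stake L (sdrop (j * L) (sdrop L \<omega>)) \<noteq> w"
      using a by (metis sdrop_add mult_Suc add.commute)
    ultimately show "\<omega> \<in> {\<omega>. stake L \<omega> \<in> - {w} \<and> sdrop L \<omega> \<in> A}" by (simp add: A_def)
  next
    fix \<omega> assume "\<omega> \<in> {\<omega>. stake L \<omega> \<in> - {w} \<and> sdrop L \<omega> \<in> A}"
    hence a: "stake L \<omega> \<noteq> w" "\<forall>j. stake L (sdrop (j * L) (sdrop L \<omega>)) \<noteq> w" by (auto simp: A_def)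
    show "\<omega> \<in> A" unfolding A_def
    proof (intro CollectI allI)
      fix j show "stake L (sdrop (j * L) \<omega>) \<noteq> w"
      proof (cases j)
        case 0 thus ?thesis using a(1) by simp
      next
        case (Suc j') thus ?thesis using a(2)[rule_format, of j'] by (simp add: add.commute)
      qed
    qed
  qed
  hence "emeasure ?S A = emeasure ?S {\<omega>. stake L \<omega> \<in> - {w}} * emeasure ?S A"
    using decomp[OF Ameas, of L "- {w}"] by simp
  hence eqm: "S.prob A = S.prob {\<omega>. stake L \<omega> \<in> - {w}} * S.prob A"
    by (simp add: S.emeasure_eq_measure ennreal_mult''[symmetric])
  have Wm: "{\<omega>. stake L \<omega> = w} \<in> sets ?S" using meas_stake[of L "{w}" D] by simp
  have "0 < emeasure ?S {\<omega>. stake L \<omega> = w}" using pos_word[OF w(1)] by (simp add: L_def)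
  hence pw: "0 < S.prob {\<omega>. stake L \<omega> = w}" by (simp add: S.emeasure_eq_measure)
  have "{\<omega>. stake L \<omega> \<in> - {w}} = space ?S - {\<omega>. stake L \<omega> = w}" by (auto simp: space_SD)
  hence "S.prob {\<omega>. stake L \<omega> \<in> - {w}} = 1 - S.prob {\<omega>. stake L \<omega> = w}"
    using S.prob_compl[OF Wm] by simp
  with eqm have "S.prob A = (1 - S.prob {\<omega>. stake L \<omega> = w}) * S.prob A" by simp
  hence "S.prob A = S.prob A - S.prob {\<omega>. stake L \<omega> = w} * S.prob A" by (simp add: left_diff_distrib)
  hence "S.prob {\<omega>. stake L \<omega> = w} * S.prob A = 0" by linarith
  with pw have "S.prob A = 0" by simp
  hence A0: "emeasure ?S A = 0" by (simp add: S.emeasure_eq_measure)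
  define B where "B = (\<lambda>k. {\<omega>. sdrop (k * L) \<omega> \<in> A})"
  have Bnull: "B k \<in> null_sets ?S" for k
  proof
    show "B k \<in> sets ?S" unfolding B_def by (rule meas_sdrop[OF Ameas])
    have "B k = {\<omega>. stake (k * L) \<omega> \<in> UNIV \<and> sdrop (k * L) \<omega> \<in> A}" by (simp add: B_def)
    thus "emeasure ?S (B k) = 0" using decomp[OF Ameas, of "k * L" UNIV] A0 by simp
  qed
  have "(\<Union>k. B k) \<in> null_sets ?S" using Bnull by blast
  moreover have "{\<omega> \<in> space ?S. \<not> (\<forall>k. \<exists>j\<ge>k. stake L (sdrop (j * L) \<omega>) = w)} \<subseteq> (\<Union>k. B k)"
  proof
    fix \<omega> assume "\<omega> \<in> {\<omega> \<in> space ?S. \<not> (\<forall>k. \<exists>j\<ge>k. stake L (sdrop (j * L) \<omega>) = w)}"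
    then obtain k where k: "\<forall>j\<ge>k. stake L (sdrop (j * L) \<omega>) \<noteq> w" by auto
    have "sdrop (k * L) \<omega> \<in> A" unfolding A_def
    proof (intro CollectI allI)
      fix j
      have "sdrop (j * L) (sdrop (k * L) \<omega>) = sdrop ((k + j) * L) \<omega>" by (simp add: add_mult_distrib)
      thus "stake L (sdrop (j * L) (sdrop (k * L) \<omega>)) \<noteq> w" using k by simp
    qed
    thus "\<omega> \<in> (\<Union>k. B k)" by (auto simp: B_def)
  qed
  ultimately have "AE \<omega> in ?S. \<forall>k. \<exists>j\<ge>k. stake L (sdrop (j * L) \<omega>) = w" by (rule AE_I')
  thus ?thesis by (simp add: L_def)
qed

lemma AE_entries:
  fixes D :: "('a::countable) pmf"
  shows "AE \<omega> in stream_space (measure_pmf D). \<forall>t. \<omega> !! t \<in> set_pmf D"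
proof -
  have "AE \<omega> in stream_space (measure_pmf D). stream_all (\<lambda>x. x \<in> set_pmf D) \<omega>"
    by (rule prob_space.AE_stream_all[OF prob_space_measure_pmf]) (auto simp: AE_measure_pmf)
  thus ?thesis by (rule eventually_mono) (simp add: stream_all_def)
qed



theorem mainTheorem6:
  fixes f :: "real \<Rightarrow> real" and D :: "(nat \<times> nat) pmf" and n :: nat
    and U0 :: "nat \<Rightarrow> real ^ 'd"
  assumes "CARD('d) \<ge> 2" and "n \<ge> 2"
    and "stable f"
    and "set_pmf D = Omega n"
    and "unit_config n U0"
    and "strictly_convex n U0"
  shows "AE \<omega> in stream_space (measure_pmf D). polarizes n (traj f U0 \<omega>)"
proof -
  note n2 = assms(2)
  have fcont: "continuous_on {-1..1} f" and fsgn: "\<And>A. A \<in> {-1..1} \<Longrightarrow> sgn (f A) = sgn A"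
    using assms(3) by (auto simp: stable_def)
  obtain b0 where b0: "\<forall>i<n. b0 i \<in> {-1, 1}" "\<forall>i<n. \<forall>j<n. inner (b0 i *\<^sub>R U0 i) (b0 j *\<^sub>R U0 j) > 0"
    using assms(6) by (auto simp: strictly_convex_def)
  define b where "b = (\<lambda>i. if i < n then b0 i else 1)"
  have b: "b i = 1 \<or> b i = -1" for i using b0 by (auto simp: b_def)
  define Q where "Q = (\<lambda>(i,j). inner (b i *\<^sub>R U0 i) (b j *\<^sub>R U0 j)) ` ({..<n} \<times> {..<n})"
  have Qfin: "finite Q" by (simp add: Q_def)
  have "(0,0) \<in> {..<n} \<times> {..<n}" using n2 by simp
  hence Qne: "Q \<noteq> {}" unfolding Q_def by blast
  define m0 where "m0 = Min Q"
  have Qpos: "\<forall>q\<in>Q. 0 < q" using b0 by (auto simp: Q_def b_def)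
  have m0pos: "0 < m0" using Min_in[OF Qfin Qne] Qpos by (simp add: m0_def)
  have m0le: "m0 \<le> inner (b i *\<^sub>R U0 i) (b j *\<^sub>R U0 j)" if "i < n" "j < n" for i j
    unfolding m0_def using that by (intro Min_le Qfin) (auto simp: Q_def)
  have u0: "\<forall>i<n. norm (U0 i) = 1" using assms(5) by (simp add: unit_config_def)
  have m01: "m0 \<le> 1"
  proof -
    have "m0 \<le> inner (b 0 *\<^sub>R U0 0) (b 0 *\<^sub>R U0 0)" using m0le n2 by simp
    also have "\<dots> = 1"
    proof -
      have "norm (U0 0) = 1" using u0 n2 by simp
      hence "inner (U0 0) (U0 0) = 1" by (metis power2_norm_eq_inner power_one)
      thus ?thesis using b[of 0] by auto
    qed
    finally show ?thesis .
  qed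
  define K where "K = {-1..-m0} \<union> {m0..(1::real)}"
  have Kc: "compact K" by (simp add: K_def compact_Un)
  have Kne: "K \<noteq> {}" using m01 m0pos by (auto simp: K_def)
  have Ksub: "K \<subseteq> {-1..1}" using m01 m0pos by (auto simp: K_def)
  have "continuous_on K (\<lambda>A. \<bar>f A\<bar>)" using fcont Ksub by (intro continuous_intros continuous_on_subset[OF fcont Ksub])
  then obtain A0 where A0: "A0 \<in> K" "\<forall>y\<in>K. \<bar>f A0\<bar> \<le> \<bar>f y\<bar>" using continuous_attains_inf[OF Kc Kne] by blast
  define \<delta> where "\<delta> = \<bar>f A0\<bar>"
  have "A0 \<noteq> 0" using A0(1) m0pos by (auto simp: K_def)
  hence "f A0 \<noteq> 0" using fsgn[of A0] A0(1) Ksub by (auto simp: sgn_if split: if_splits)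
  hence \<delta>pos: "0 < \<delta>" by (simp add: \<delta>_def)
  have f\<delta>: "\<delta> \<le> \<bar>f A\<bar>" if "A \<in> {-1..1}" "m0 \<le> \<bar>A\<bar>" for A
  proof -
    have "A \<in> K" using that by (auto simp: K_def abs_if split: if_splits)
    thus ?thesis using A0 by (simp add: \<delta>_def)
  qed
  interpret setting f n b m0 \<delta>
    by unfold_locales (use b m0pos \<delta>pos fsgn f\<delta> in auto)
  have g0: "good U0 m0" using u0 m0le by (simp add: good_def)
  obtain r0 where r0: "(1 / (1 + \<delta>))^r0 < 1/8" using real_arch_pow_inv[of "1/8" "1 / (1 + \<delta>)"] \<delta>pos by auto
  define r where "r = Suc r0"
  have "(1 / (1 + \<delta>))^r \<le> (1 / (1 + \<delta>))^r0" unfolding r_def using \<delta>pos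
    by (intro power_decreasing) auto
  hence r: "4 * (1 / (1 + \<delta>))^r \<le> 1/2" using r0 by linarith
  have r1: "1 \<le> r" by (simp add: r_def)
  define P where "P = concat (map (\<lambda>i. replicate r (i, 0::nat)) [1..<n])"
  have lenP: "length P = r * (n - 1)" by (simp add: P_def length_concat o_def sum_list_triv)
  have Pset: "set P \<subseteq> set_pmf D" using assms(4) r1 by (auto simp: P_def Omega_def)
  have Pne: "P \<noteq> []" using lenP r1 n2 by auto
  have "AE \<omega> in stream_space (measure_pmf D). \<forall>k. \<exists>j\<ge>k. stake (length P) (sdrop (j * length P) \<omega>) = P"
    by (rule io_word[OF Pset Pne])
  moreover have "AE \<omega> in stream_space (measure_pmf D). \<forall>t. \<omega> !! t \<in> set_pmf D" by (rule AE_entries)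
  ultimately show ?thesis
  proof eventually_elim
    case (elim \<omega>)
    show ?case
      by (rule det[OF g0 n2 _ r r1]) (use elim assms(4) lenP in \<open>auto simp: P_def\<close>)
  qed
qed


end
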